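(* Let $\mathcal{C}\subset\mathbb{R}^n$ be closed and Clarke regular, $f:\mathbb{R}^n\to\mathbb{R}^n$ continuous and $G:\mathcal{C}\to\mathbb{S}^n_+$ a continuous metric, with $\gamma\ge\sup_{x\in\mathcal{C}}\|f(x)\|_{G(x)}$ finite. Then the inclusion $\dot x\in F(x):=f(x)-N^G_x\mathcal{C}\cap\gamma\mathbb{B}$, $x\in\mathcal{C}$, is well-posed.
   Context: $\mathbb{B}$ is the closed unit ball; $\|u\|_{G(x)}:=(u^TG(x)u)^{1/2}$. $T_x\mathcal{C}$ is the tangent cone ($v\in T_x\mathcal{C}$ iff $x_k\to x$ in $\mathcal{C}$, $\delta_k\to0^+$ with $(x_k-x)/\delta_k\to v$); Clarke regular means $x\mapsto T_x\mathcal{C}$ is inner semicontinuous. $N^G_x\mathcal{C}:=\{\eta:\eta^TG(x)v\le0\ \forall v\in T_x\mathcal{C}\}$. An inclusion $\dot x\in H(x)$, $x\in\mathcal{C}$, is well-posed if $\mathcal{C}$ is closed, $H$ is outer semicontinuous and locally bounded relative to $\mathcal{C}$, and $H(x)$ is non-empty and convex for all $x\in\mathcal{C}$. *)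

theory Defs
  imports "HOL-Analysis.Analysis"
begin

definition tangent_cone :: "('a::real_normed_vector) set \<Rightarrow> 'a \<Rightarrow> 'a set" where
  "tangent_cone C x = {v. \<exists>xs::nat \<Rightarrow> 'a. \<exists>\<delta>::nat \<Rightarrow> real.
      (\<forall>k. xs k \<in> C) \<and> xs \<longlonglongrightarrow> x \<and> (\<forall>k. \<delta> k > 0) \<and> \<delta> \<longlonglongrightarrow> 0 \<and>
      (\<lambda>k. (1 / \<delta> k) *\<^sub>R (xs k - x)) \<longlonglongrightarrow> v}"

definition inner_semicontinuous_on :: "'a::metric_space set \<Rightarrow> ('a \<Rightarrow> 'b::metric_space set) \<Rightarrow> bool" where
  "inner_semicontinuous_on C H \<longleftrightarrow> (\<forall>x\<in>C. \<forall>v\<in>H x. \<forall>xs::nat \<Rightarrow> 'a.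
      (\<forall>k. xs k \<in> C) \<and> xs \<longlonglongrightarrow> x \<longrightarrow>
      (\<exists>vs::nat \<Rightarrow> 'b. (\<forall>k. vs k \<in> H (xs k)) \<and> vs \<longlonglongrightarrow> v))"

definition clarke_regular :: "('a::real_normed_vector) set \<Rightarrow> bool" where
  "clarke_regular C \<longleftrightarrow> inner_semicontinuous_on C (tangent_cone C)"

definition outer_semicontinuous_on :: "'a::metric_space set \<Rightarrow> ('a \<Rightarrow> 'b::metric_space set) \<Rightarrow> bool" where
  "outer_semicontinuous_on C H \<longleftrightarrow> (\<forall>x\<in>C. \<forall>xs::nat \<Rightarrow> 'a. \<forall>vs::nat \<Rightarrow> 'b. \<forall>v.
      (\<forall>k. xs k \<in> C) \<and> xs \<longlonglongrightarrow> x \<and> (\<forall>k. vs k \<in> H (xs k)) \<and> vs \<longlonglongrightarrow> v \<longrightarrow> v \<in> H x)"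

definition locally_bounded_on :: "'a::metric_space set \<Rightarrow> ('a \<Rightarrow> 'b::metric_space set) \<Rightarrow> bool" where
  "locally_bounded_on C H \<longleftrightarrow> (\<forall>x\<in>C. \<exists>U. open U \<and> x \<in> U \<and> bounded (\<Union>y\<in>U \<inter> C. H y))"

definition well_posed :: "('a::real_normed_vector) set \<Rightarrow> ('a \<Rightarrow> 'a set) \<Rightarrow> bool" where
  "well_posed C H \<longleftrightarrow> closed C \<and> outer_semicontinuous_on C H \<and> locally_bounded_on C H \<and>
      (\<forall>x\<in>C. H x \<noteq> {} \<and> convex (H x))"

definition pos_def_sym :: "real^'n^'n \<Rightarrow> bool" where
  "pos_def_sym A \<longleftrightarrow> transpose A = A \<and> (\<forall>u. u \<noteq> 0 \<longrightarrow> u \<bullet> (A *v u) > 0)"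

definition G_norm :: "(real^'n::finite \<Rightarrow> real^'n^'n) \<Rightarrow> real^'n \<Rightarrow> real^'n \<Rightarrow> real" where
  "G_norm G x u = sqrt (u \<bullet> (G x *v u))"

definition G_normal_cone :: "(real^'n::finite \<Rightarrow> real^'n^'n) \<Rightarrow> (real^'n) set \<Rightarrow> real^'n \<Rightarrow> (real^'n) set" where
  "G_normal_cone G C x = {\<eta>. \<forall>v\<in>tangent_cone C x. \<eta> \<bullet> (G x *v v) \<le> 0}"

end

theory Submission
  imports Defs
begin

lemma mv_tendsto:
  fixes A :: "nat \<Rightarrow> real^'n^'m" and w :: "nat \<Rightarrow> real^'n"
  assumes "A \<longlonglongrightarrow> B" "w \<longlonglongrightarrow> v"
  shows "(\<lambda>k. A k *v w k) \<longlonglongrightarrow> B *v v"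
proof (rule vec_tendstoI)
  fix i
  have "(\<lambda>k. \<Sum>j\<in>UNIV. A k $ i $ j * w k $ j) \<longlonglongrightarrow> (\<Sum>j\<in>UNIV. B $ i $ j * v $ j)"
    by (intro tendsto_intros tendsto_vec_nth assms)
  then show "(\<lambda>k. (A k *v w k) $ i) \<longlonglongrightarrow> (B *v v) $ i"
    by (simp add: matrix_vector_mult_def)
qed

lemma normal_convex:
  fixes G :: "real^'n \<Rightarrow> real^'n^'n"
  shows "convex (G_normal_cone G C x)"
  unfolding G_normal_cone_def convex_def
proof (intro allI impI ballI, safe)
  fix a b :: "real^'n" and u v :: real and w :: "real^'n"
  assume a: "\<forall>w\<in>tangent_cone C x. a \<bullet> (G x *v w) \<le> 0"
    and b: "\<forall>w\<in>tangent_cone C x. b \<bullet> (G x *v w) \<le> 0"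
    and uv: "0 \<le> u" "0 \<le> v" "u + v = 1" and w: "w \<in> tangent_cone C x"
  have "(u *\<^sub>R a + v *\<^sub>R b) \<bullet> (G x *v w) = u * (a \<bullet> (G x *v w)) + v * (b \<bullet> (G x *v w))"
    by (simp add: inner_add_left)
  also have "\<dots> \<le> 0"
    using a b w uv by (meson add_nonpos_nonpos mult_nonneg_nonpos)
  finally show "(u *\<^sub>R a + v *\<^sub>R b) \<bullet> (G x *v w) \<le> 0" .
qed

theorem lemma2p12:
  fixes C :: "(real^'n) set"
    and f :: "real^'n \<Rightarrow> real^'n"
    and G :: "real^'n \<Rightarrow> real^'n^'n"
    and \<gamma> :: real
  assumes "closed C"
    and "clarke_regular C"
    and "continuous_on UNIV f"
    and "continuous_on C G"
    and "\<forall>x\<in>C. pos_def_sym (G x)"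
    and "\<forall>x\<in>C. G_norm G x (f x) \<le> \<gamma>"
  shows "well_posed C (\<lambda>x. {f x - \<eta> | \<eta>. \<eta> \<in> G_normal_cone G C x \<inter> cball 0 \<gamma>})"
  unfolding well_posed_def
proof (intro conjI ballI)
  show "closed C" by fact
next
  fix x assume x: "x \<in> C"
  have "0 \<le> f x \<bullet> (G x *v f x)"
    using assms(5) x unfolding pos_def_sym_def
    by (cases "f x = 0") (auto intro: less_imp_le)
  then have "0 \<le> G_norm G x (f x)" unfolding G_norm_def by simp
  then have g: "0 \<le> \<gamma>" using assms(6) x by fastforce
  have "0 \<in> G_normal_cone G C x" unfolding G_normal_cone_def by simp
  then show "{f x - \<eta> | \<eta>. \<eta> \<in> G_normal_cone G C x \<inter> cball 0 \<gamma>} \<noteq> {}"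
    using g by force
next
  fix x assume x: "x \<in> C"
  have "{f x - \<eta> | \<eta>. \<eta> \<in> G_normal_cone G C x \<inter> cball 0 \<gamma>}
      = (\<lambda>\<eta>. f x - \<eta>) ` (G_normal_cone G C x \<inter> cball 0 \<gamma>)" by auto
  moreover have "convex (G_normal_cone G C x \<inter> cball 0 \<gamma>)"
    by (intro convex_Int normal_convex convex_cball)
  moreover have "(\<lambda>\<eta>. f x - \<eta>) ` (G_normal_cone G C x \<inter> cball 0 \<gamma>)
      = (+) (f x) ` ((\<lambda>\<eta>. - \<eta>) ` (G_normal_cone G C x \<inter> cball 0 \<gamma>))"
    by (simp add: image_image)
  ultimately show "convex {f x - \<eta> | \<eta>. \<eta> \<in> G_normal_cone G C x \<inter> cball 0 \<gamma>}"
    using convex_translation convex_negations by metis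
next
  show "locally_bounded_on C (\<lambda>x. {f x - \<eta> | \<eta>. \<eta> \<in> G_normal_cone G C x \<inter> cball 0 \<gamma>})"
    unfolding locally_bounded_on_def
  proof
    fix x assume x: "x \<in> C"
    have "compact (f ` cball x 1)"
      using assms(3) by (intro compact_continuous_image) (auto intro: continuous_on_subset)
    then have "bounded (f ` cball x 1)" by (rule compact_imp_bounded)
    then obtain M where "\<forall>z\<in>f ` cball x 1. norm z \<le> M"
      unfolding bounded_iff by blast
    then have M: "\<And>y. y \<in> cball x 1 \<Longrightarrow> norm (f y) \<le> M" by simp
    have "(\<Union>y\<in>ball x 1 \<inter> C. {f y - \<eta> | \<eta>. \<eta> \<in> G_normal_cone G C y \<inter> cball 0 \<gamma>}) \<subseteq> cball 0 (M + \<gamma>)"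
    proof clarsimp
      fix y and \<eta> :: "real^'n" assume y: "dist x y < 1" and e: "norm \<eta> \<le> \<gamma>"
      have "norm (f y) \<le> M" using M y by simp
      then show "norm (f y - \<eta>) \<le> M + \<gamma>" using e norm_triangle_ineq4[of "f y" \<eta>] by linarith
    qed
    then show "\<exists>U. open U \<and> x \<in> U \<and> bounded (\<Union>y\<in>U \<inter> C. {f y - \<eta> | \<eta>. \<eta> \<in> G_normal_cone G C y \<inter> cball 0 \<gamma>})"
      by (intro exI[of _ "ball x 1"]) (meson bounded_cball bounded_subset centre_in_ball open_ball zero_less_one)
  qed
next
  show "outer_semicontinuous_on C (\<lambda>x. {f x - \<eta> | \<eta>. \<eta> \<in> G_normal_cone G C x \<inter> cball 0 \<gamma>})"
    unfolding outer_semicontinuous_on_def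
  proof (intro ballI allI impI, elim conjE)
    fix x xs vs v
    assume x: "x \<in> C" and xs: "\<forall>k. xs k \<in> C" and xl: "xs \<longlonglongrightarrow> x"
      and vs: "\<forall>k. vs k \<in> {f (xs k) - \<eta> | \<eta>. \<eta> \<in> G_normal_cone G C (xs k) \<inter> cball 0 \<gamma>}"
      and vl: "vs \<longlonglongrightarrow> v"
    define \<eta>s where "\<eta>s k = f (xs k) - vs k" for k
    have \<eta>N: "\<eta>s k \<in> G_normal_cone G C (xs k)" and \<eta>B: "norm (\<eta>s k) \<le> \<gamma>" for k
      using vs[rule_format, of k] by (auto simp: \<eta>s_def)
    have fl: "(\<lambda>k. f (xs k)) \<longlonglongrightarrow> f x"
      by (rule continuous_on_tendsto_compose[OF assms(3) xl]) auto
    have \<eta>l: "\<eta>s \<longlonglongrightarrow> f x - v"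
      unfolding \<eta>s_def by (intro tendsto_intros fl vl)
    have Gl: "(\<lambda>k. G (xs k)) \<longlonglongrightarrow> G x"
      using xs by (intro continuous_on_tendsto_compose[OF assms(4) xl x]) auto
    have "norm (f x - v) \<le> \<gamma>"
      using \<eta>B by (intro tendsto_upperbound[OF tendsto_norm[OF \<eta>l]]) auto
    moreover have "f x - v \<in> G_normal_cone G C x"
      unfolding G_normal_cone_def
    proof (intro CollectI ballI)
      fix w assume w: "w \<in> tangent_cone C x"
      have "\<exists>ws. (\<forall>k. ws k \<in> tangent_cone C (xs k)) \<and> ws \<longlonglongrightarrow> w"
        using assms(2) x w xs xl unfolding clarke_regular_def inner_semicontinuous_on_def
        by (elim ballE allE[of _ xs] impE) auto
      then obtain ws where ws: "\<And>k. ws k \<in> tangent_cone C (xs k)" and wl: "ws \<longlonglongrightarrow> w"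
        by blast
      have "(\<lambda>k. \<eta>s k \<bullet> (G (xs k) *v ws k)) \<longlonglongrightarrow> (f x - v) \<bullet> (G x *v w)"
        by (intro tendsto_inner \<eta>l mv_tendsto Gl wl)
      moreover have "\<eta>s k \<bullet> (G (xs k) *v ws k) \<le> 0" for k
        using \<eta>N[of k] ws[of k] unfolding G_normal_cone_def by blast
      ultimately show "(f x - v) \<bullet> (G x *v w) \<le> 0"
        using LIMSEQ_le_const2 by blast
    qed
    ultimately show "v \<in> {f x - \<eta> | \<eta>. \<eta> \<in> G_normal_cone G C x \<inter> cball 0 \<gamma>}"
      by (intro CollectI exI[of _ "f x - v"]) auto
  qed
qed

end
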